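(* Let $0\to(M,\alpha_M)\to(K,\alpha_K)\xrightarrow{\pi}(L,\alpha_L)\to0$ be a central extension of Hom-Leibniz $n$-algebras. If $(K,\alpha_K)$ is perfect and every central extension of $(K,\alpha_K)$ splits, then $\pi$ is a universal central extension.
   Context: Fix a field $\mathbb K$ and $n\ge2$. A (multiplicative) Hom-Leibniz $n$-algebra is a $\mathbb K$-vector space $L$ with an $n$-linear bracket and a linear map $\alpha_L$ preserving the bracket, satisfying $[[x_1,\dots,x_n],\alpha_L(y_1),\dots,\alpha_L(y_{n-1})]=\sum_{i=1}^n[\alpha_L(x_1),\dots,[x_i,y_1,\dots,y_{n-1}],\dots,\alpha_L(x_n)]$. Homomorphisms preserve brackets and commute with twisting maps. Perfect: $K=[K,\dots,K]$. Center $Z(K)$: elements $x$ such that every bracket with $x$ in some position equals $0$. An extension of $L$ is a surjective homomorphism $\pi:K\to L$ with kernel $M$; central if $M\subseteq Z(K)$. An extension $\rho:F\to K$ splits if there is a homomorphism $\sigma:K\to F$ with $\rho\circ\sigma=\mathrm{id}_K$. A central extension $\pi:K\to L$ is universal central if for every central extension $\pi':K'\to L$ there is a unique homomorphism $h:K\to K'$ with $\pi'\circ h=\pi$. *)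

theory Defs
  imports Complex_Main "HOL-Library.Product_Plus"
begin

text \<open>A Hom-Leibniz n-algebra over a field 'a: a carrier set (a subspace of a vector space
  whose addition is that of the ambient type 'v), scalar multiplication, an n-ary bracket
  (taking a list of n arguments) and a twisting map.\<close>

record ('a, 'v) hlalg =
  carrier :: "'v set"
  smul :: "'a \<Rightarrow> 'v \<Rightarrow> 'v"
  brk :: "'v list \<Rightarrow> 'v"
  tw :: "'v \<Rightarrow> 'v"

definition args :: "nat \<Rightarrow> ('a, 'v) hlalg \<Rightarrow> 'v list set" where
  "args k A = {xs. length xs = k \<and> set xs \<subseteq> carrier A}"

definition hom_leibniz :: "nat \<Rightarrow> ('a::field, 'v::ab_group_add) hlalg \<Rightarrow> bool" where
  "hom_leibniz n A \<longleftrightarrow>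
     vector_space (smul A) \<and> module.subspace (smul A) (carrier A) \<and>
     (\<forall>xs \<in> args n A. brk A xs \<in> carrier A) \<and>
     (\<forall>xs \<in> args n A. \<forall>i < n. \<forall>u \<in> carrier A. \<forall>v \<in> carrier A.
        brk A (xs[i := u + v]) = brk A (xs[i := u]) + brk A (xs[i := v])) \<and>
     (\<forall>xs \<in> args n A. \<forall>i < n. \<forall>u \<in> carrier A. \<forall>c.
        brk A (xs[i := smul A c u]) = smul A c (brk A (xs[i := u]))) \<and>
     (\<forall>x \<in> carrier A. tw A x \<in> carrier A) \<and>
     (\<forall>x \<in> carrier A. \<forall>y \<in> carrier A. tw A (x + y) = tw A x + tw A y) \<and>
     (\<forall>x \<in> carrier A. \<forall>c. tw A (smul A c x) = smul A c (tw A x)) \<and>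
     (\<forall>xs \<in> args n A. tw A (brk A xs) = brk A (map (tw A) xs)) \<and>
     (\<forall>xs \<in> args n A. \<forall>ys \<in> args (n - 1) A.
        brk A (brk A xs # map (tw A) ys) =
          (\<Sum>i<n. brk A ((map (tw A) xs)[i := brk A (xs ! i # ys)])))"

definition hl_hom ::
  "nat \<Rightarrow> ('a::field, 'v::ab_group_add) hlalg \<Rightarrow> ('a, 'w::ab_group_add) hlalg \<Rightarrow> ('v \<Rightarrow> 'w) \<Rightarrow> bool" where
  "hl_hom n A B f \<longleftrightarrow>
     (\<forall>x \<in> carrier A. f x \<in> carrier B) \<and>
     (\<forall>x \<in> carrier A. \<forall>y \<in> carrier A. f (x + y) = f x + f y) \<and>
     (\<forall>x \<in> carrier A. \<forall>c. f (smul A c x) = smul B c (f x)) \<and>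
     (\<forall>xs \<in> args n A. f (brk A xs) = brk B (map f xs)) \<and>
     (\<forall>x \<in> carrier A. f (tw A x) = tw B (f x))"

definition perfect :: "nat \<Rightarrow> ('a::field, 'v::ab_group_add) hlalg \<Rightarrow> bool" where
  "perfect n A \<longleftrightarrow> carrier A = module.span (smul A) {brk A xs | xs. xs \<in> args n A}"

definition center :: "nat \<Rightarrow> ('a, 'v::zero) hlalg \<Rightarrow> 'v set" where
  "center n A = {x \<in> carrier A. \<forall>xs \<in> args n A. \<forall>i < n. brk A (xs[i := x]) = 0}"

definition hl_extension ::
  "nat \<Rightarrow> ('a::field, 'v::ab_group_add) hlalg \<Rightarrow> ('a, 'w::ab_group_add) hlalg \<Rightarrow> ('v \<Rightarrow> 'w) \<Rightarrow> bool" where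
  "hl_extension n K L p \<longleftrightarrow>
     hom_leibniz n K \<and> hom_leibniz n L \<and> hl_hom n K L p \<and> p ` carrier K = carrier L"

definition kernel :: "('a, 'v) hlalg \<Rightarrow> ('v \<Rightarrow> 'w::zero) \<Rightarrow> 'v set" where
  "kernel K p = {x \<in> carrier K. p x = 0}"

definition central_extension ::
  "nat \<Rightarrow> ('a::field, 'v::ab_group_add) hlalg \<Rightarrow> ('a, 'w::ab_group_add) hlalg \<Rightarrow> ('v \<Rightarrow> 'w) \<Rightarrow> bool" where
  "central_extension n K L p \<longleftrightarrow> hl_extension n K L p \<and> kernel K p \<subseteq> center n K"

definition splits ::
  "nat \<Rightarrow> ('a::field, 'v::ab_group_add) hlalg \<Rightarrow> ('a, 'w::ab_group_add) hlalg \<Rightarrow> ('v \<Rightarrow> 'w) \<Rightarrow> bool" where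
  "splits n F K r \<longleftrightarrow> (\<exists>s. hl_hom n K F s \<and> (\<forall>x \<in> carrier K. r (s x) = x))"

text \<open>Every central extension of K (with total space on the type 'f) splits.\<close>
definition all_central_ext_split ::
  "nat \<Rightarrow> ('a::field, 'v::ab_group_add) hlalg \<Rightarrow> 'f::ab_group_add itself \<Rightarrow> bool" where
  "all_central_ext_split n K _ \<longleftrightarrow>
     (\<forall>(F :: ('a, 'f) hlalg) r. central_extension n F K r \<longrightarrow> splits n F K r)"

text \<open>Universal central extension, with test extensions K' living on the type 'c.
  Homomorphisms are functions on the whole type, so uniqueness is on the carrier.\<close>
definition universal_central_extension ::
  "nat \<Rightarrow> ('a::field, 'v::ab_group_add) hlalg \<Rightarrow> ('a, 'w::ab_group_add) hlalg \<Rightarrow> ('v \<Rightarrow> 'w)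
     \<Rightarrow> 'c::ab_group_add itself \<Rightarrow> bool" where
  "universal_central_extension n K L p _ \<longleftrightarrow>
     central_extension n K L p \<and>
     (\<forall>(K' :: ('a, 'c) hlalg) p'. central_extension n K' L p' \<longrightarrow>
        (\<exists>h. hl_hom n K K' h \<and> (\<forall>x \<in> carrier K. p' (h x) = p x)) \<and>
        (\<forall>h1 h2. hl_hom n K K' h1 \<and> (\<forall>x \<in> carrier K. p' (h1 x) = p x) \<and>
                 hl_hom n K K' h2 \<and> (\<forall>x \<in> carrier K. p' (h2 x) = p x) \<longrightarrow>
                 (\<forall>x \<in> carrier K. h1 x = h2 x)))"

end

theory Submission
  imports Defs
begin

lemma hl_vs: "hom_leibniz n A \<Longrightarrow> vector_space (smul A)"
  by (simp add: hom_leibniz_def)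

lemma hl_sub: "hom_leibniz n A \<Longrightarrow> module.subspace (smul A) (carrier A)"
  by (simp add: hom_leibniz_def)

lemma hl_zero: "hom_leibniz n A \<Longrightarrow> 0 \<in> carrier A"
proof -
  assume h: "hom_leibniz n A"
  interpret vector_space "smul A" using hl_vs[OF h] .
  show ?thesis using subspace_0[OF hl_sub[OF h]] .
qed

lemma hl_add: "hom_leibniz n A \<Longrightarrow> x \<in> carrier A \<Longrightarrow> y \<in> carrier A \<Longrightarrow> x + y \<in> carrier A"
proof -
  assume h: "hom_leibniz n A" "x \<in> carrier A" "y \<in> carrier A"
  interpret vector_space "smul A" using hl_vs[OF h(1)] .
  show ?thesis using subspace_add[OF hl_sub[OF h(1)] h(2,3)] .
qed

lemma hl_scale: "hom_leibniz n A \<Longrightarrow> x \<in> carrier A \<Longrightarrow> smul A c x \<in> carrier A"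
proof -
  assume h: "hom_leibniz n A" "x \<in> carrier A"
  interpret vector_space "smul A" using hl_vs[OF h(1)] .
  show ?thesis using subspace_scale[OF hl_sub[OF h(1)] h(2)] .
qed

lemma hl_diff: "hom_leibniz n A \<Longrightarrow> x \<in> carrier A \<Longrightarrow> y \<in> carrier A \<Longrightarrow> x - y \<in> carrier A"
proof -
  assume h: "hom_leibniz n A" "x \<in> carrier A" "y \<in> carrier A"
  interpret vector_space "smul A" using hl_vs[OF h(1)] .
  show ?thesis using subspace_diff[OF hl_sub[OF h(1)] h(2,3)] .
qed

lemma hom_zero:
  assumes "hl_hom n A B f" "hom_leibniz n A" shows "f 0 = 0"
proof -
  have "f (0 + 0) = f 0 + f 0" using assms(1) hl_zero[OF assms(2)] unfolding hl_hom_def by blast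
  thus ?thesis by simp
qed

lemma hom_diff:
  assumes "hl_hom n A B f" "hom_leibniz n A" "x \<in> carrier A" "y \<in> carrier A"
  shows "f (x - y) = f x - f y"
proof -
  have "f ((x - y) + y) = f (x - y) + f y"
    using assms(1,4) hl_diff[OF assms(2-4)] unfolding hl_hom_def by blast
  thus ?thesis by (simp add: algebra_simps)
qed

lemma args_update: "xs \<in> args k A \<Longrightarrow> u \<in> carrier A \<Longrightarrow> xs[i := u] \<in> args k A"
  unfolding args_def using set_update_subset_insert by fastforce

lemma brk_zero:
  assumes "hom_leibniz n A" "xs \<in> args n A" "i < n"
  shows "brk A (xs[i := 0]) = 0"
proof -
  have "brk A (xs[i := 0 + 0]) = brk A (xs[i := 0]) + brk A (xs[i := 0])"
    using assms hl_zero[OF assms(1)] unfolding hom_leibniz_def by blast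
  thus ?thesis by simp
qed

lemma center_replace:
  assumes A: "hom_leibniz n A" and ys: "ys \<in> args n A" and zs: "zs \<in> args n A"
    and c: "\<forall>j<n. ys ! j - zs ! j \<in> center n A"
  shows "k \<le> n \<Longrightarrow> brk A ys = brk A (take k zs @ drop k ys)"
proof (induction k)
  case 0 then show ?case by simp
next
  case (Suc k)
  define ws where "ws = take k zs @ drop k ys"
  have ly: "length ys = n" and lz: "length zs = n" using ys zs by (auto simp: args_def)
  have wsA: "ws \<in> args n A" unfolding ws_def args_def using ys zs Suc.prems
    by (auto simp: args_def dest: in_set_takeD in_set_dropD)
  have kn: "k < n" using Suc.prems by simp
  have wk: "ws ! k = ys ! k" unfolding ws_def using kn ly lz by (simp add: nth_append)
  have nw: "take (Suc k) zs @ drop (Suc k) ys = ws[k := zs ! k]"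
    unfolding ws_def using kn ly lz
    by (simp add: list_update_append take_Suc_conv_app_nth Cons_nth_drop_Suc upd_conv_take_nth_drop)
  have zk: "zs ! k \<in> carrier A" using zs kn lz by (auto simp: args_def)
  have ck: "ys ! k - zs ! k \<in> center n A" using c kn by simp
  hence ckc: "ys ! k - zs ! k \<in> carrier A" by (simp add: center_def)
  have "brk A ws = brk A (ws[k := zs ! k + (ys ! k - zs ! k)])"
    using wk by (metis add.commute diff_add_cancel list_update_id)
  also have "\<dots> = brk A (ws[k := zs ! k]) + brk A (ws[k := ys ! k - zs ! k])"
    using A wsA kn zk ckc unfolding hom_leibniz_def by blast
  also have "brk A (ws[k := ys ! k - zs ! k]) = 0" using ck wsA kn by (simp add: center_def)
  finally show ?case using Suc nw ws_def by simp
qed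

lemma center_brk_eq:
  assumes A: "hom_leibniz n A" and ys: "ys \<in> args n A" and zs: "zs \<in> args n A"
    and c: "\<forall>j<n. ys ! j - zs ! j \<in> center n A"
  shows "brk A ys = brk A zs"
  using center_replace[OF assms, of n] zs ys by (simp add: args_def)

definition pb :: "('a, 'k) hlalg \<Rightarrow> ('a, 'c) hlalg \<Rightarrow> ('k \<Rightarrow> 'l) \<Rightarrow> ('c \<Rightarrow> 'l) \<Rightarrow> ('a, 'k \<times> 'c) hlalg" where
  "pb K K' p p' = \<lparr>carrier = {x. fst x \<in> carrier K \<and> snd x \<in> carrier K' \<and> p (fst x) = p' (snd x)},
     smul = (\<lambda>c x. (smul K c (fst x), smul K' c (snd x))),
     brk = (\<lambda>xs. (brk K (map fst xs), brk K' (map snd xs))),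
     tw = (\<lambda>x. (tw K (fst x), tw K' (snd x)))\<rparr>"

lemma pb_simps [simp]:
  "carrier (pb K K' p p') = {x. fst x \<in> carrier K \<and> snd x \<in> carrier K' \<and> p (fst x) = p' (snd x)}"
  "smul (pb K K' p p') = (\<lambda>c x. (smul K c (fst x), smul K' c (snd x)))"
  "brk (pb K K' p p') = (\<lambda>xs. (brk K (map fst xs), brk K' (map snd xs)))"
  "tw (pb K K' p p') = (\<lambda>x. (tw K (fst x), tw K' (snd x)))"
  by (simp_all add: pb_def)

lemma pb_args:
  assumes "xs \<in> args m (pb K K' p p')"
  shows "map fst xs \<in> args m K" "map snd xs \<in> args m K'" "map p (map fst xs) = map p' (map snd xs)"
  using assms by (auto simp: args_def intro!: nth_equalityI dest!: nth_mem)

lemma pb_hl: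
  fixes K :: "('a::field, 'k::ab_group_add) hlalg" and K' :: "('a, 'c::ab_group_add) hlalg"
    and L :: "('a, 'l::ab_group_add) hlalg"
  assumes kK: "hom_leibniz n K" and kK': "hom_leibniz n K'" and kL: "hom_leibniz n L"
    and hp: "hl_hom n K L p" and hp': "hl_hom n K' L p'"
  shows "hom_leibniz n (pb K K' p p')"
proof -
  let ?F = "pb K K' p p'"
  have vF: "vector_space (smul ?F)"
    using vector_space.vector_space_assms[OF hl_vs[OF kK]] vector_space.vector_space_assms[OF hl_vs[OF kK']]
    by (unfold_locales) (simp_all add: prod_eq_iff)
  have sF: "module.subspace (smul ?F) (carrier ?F)"
  proof -
    interpret vector_space "smul ?F" by (rule vF)
    show ?thesis
    proof (rule subspaceI)
      show "0 \<in> carrier ?F" using hl_zero[OF kK] hl_zero[OF kK'] hom_zero[OF hp kK] hom_zero[OF hp' kK'] by simp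
    next
      fix x y assume "x \<in> carrier ?F" "y \<in> carrier ?F"
      then show "x + y \<in> carrier ?F" using hl_add[OF kK] hl_add[OF kK'] hp hp'
        unfolding hl_hom_def by auto
    next
      fix c x assume "x \<in> carrier ?F"
      then show "smul ?F c x \<in> carrier ?F" using hl_scale[OF kK] hl_scale[OF kK'] hp hp'
        unfolding hl_hom_def by auto
    qed
  qed
  have K1: "\<forall>xs \<in> args n K. brk K xs \<in> carrier K"
   and K2: "\<forall>xs \<in> args n K. \<forall>i < n. \<forall>u \<in> carrier K. \<forall>v \<in> carrier K.
        brk K (xs[i := u + v]) = brk K (xs[i := u]) + brk K (xs[i := v])"
   and K3: "\<forall>xs \<in> args n K. \<forall>i < n. \<forall>u \<in> carrier K. \<forall>c.
        brk K (xs[i := smul K c u]) = smul K c (brk K (xs[i := u]))"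
   and K4: "\<forall>x \<in> carrier K. tw K x \<in> carrier K"
   and K5: "\<forall>x \<in> carrier K. \<forall>y \<in> carrier K. tw K (x + y) = tw K x + tw K y"
   and K6: "\<forall>x \<in> carrier K. \<forall>c. tw K (smul K c x) = smul K c (tw K x)"
   and K7: "\<forall>xs \<in> args n K. tw K (brk K xs) = brk K (map (tw K) xs)"
   and K8: "\<forall>xs \<in> args n K. \<forall>ys \<in> args (n - 1) K.
        brk K (brk K xs # map (tw K) ys) =
          (\<Sum>i<n. brk K ((map (tw K) xs)[i := brk K (xs ! i # ys)]))"
    using kK unfolding hom_leibniz_def by blast+
  have K'1: "\<forall>xs \<in> args n K'. brk K' xs \<in> carrier K'"
   and K'2: "\<forall>xs \<in> args n K'. \<forall>i < n. \<forall>u \<in> carrier K'. \<forall>v \<in> carrier K'.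
        brk K' (xs[i := u + v]) = brk K' (xs[i := u]) + brk K' (xs[i := v])"
   and K'3: "\<forall>xs \<in> args n K'. \<forall>i < n. \<forall>u \<in> carrier K'. \<forall>c.
        brk K' (xs[i := smul K' c u]) = smul K' c (brk K' (xs[i := u]))"
   and K'4: "\<forall>x \<in> carrier K'. tw K' x \<in> carrier K'"
   and K'5: "\<forall>x \<in> carrier K'. \<forall>y \<in> carrier K'. tw K' (x + y) = tw K' x + tw K' y"
   and K'6: "\<forall>x \<in> carrier K'. \<forall>c. tw K' (smul K' c x) = smul K' c (tw K' x)"
   and K'7: "\<forall>xs \<in> args n K'. tw K' (brk K' xs) = brk K' (map (tw K') xs)"
   and K'8: "\<forall>xs \<in> args n K'. \<forall>ys \<in> args (n - 1) K'.
        brk K' (brk K' xs # map (tw K') ys) =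
          (\<Sum>i<n. brk K' ((map (tw K') xs)[i := brk K' (xs ! i # ys)]))"
    using kK' unfolding hom_leibniz_def by blast+
  have P4: "\<forall>xs \<in> args n K. p (brk K xs) = brk L (map p xs)"
   and P5: "\<forall>x \<in> carrier K. p (tw K x) = tw L (p x)"
    using hp unfolding hl_hom_def by blast+
  have P'4: "\<forall>xs \<in> args n K'. p' (brk K' xs) = brk L (map p' xs)"
   and P'5: "\<forall>x \<in> carrier K'. p' (tw K' x) = tw L (p' x)"
    using hp' unfolding hl_hom_def by blast+
  have F1: "\<forall>xs \<in> args n ?F. brk ?F xs \<in> carrier ?F"
  proof
    fix xs assume xs: "xs \<in> args n ?F"
    note a = pb_args[OF xs]
    show "brk ?F xs \<in> carrier ?F" using K1 K'1 P4 P'4 a by (simp del: map_map)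
  qed
  have F2: "\<forall>xs \<in> args n ?F. \<forall>i < n. \<forall>u \<in> carrier ?F. \<forall>v \<in> carrier ?F.
        brk ?F (xs[i := u + v]) = brk ?F (xs[i := u]) + brk ?F (xs[i := v])"
  proof (intro ballI allI impI)
    fix xs i u v assume xs: "xs \<in> args n ?F" and i: "i < n" and u: "u \<in> carrier ?F" and v: "v \<in> carrier ?F"
    note a = pb_args[OF xs]
    show "brk ?F (xs[i := u + v]) = brk ?F (xs[i := u]) + brk ?F (xs[i := v])"
      using K2 K'2 a i u v by (simp add: map_update)
  qed
  have F3: "\<forall>xs \<in> args n ?F. \<forall>i < n. \<forall>u \<in> carrier ?F. \<forall>c.
        brk ?F (xs[i := smul ?F c u]) = smul ?F c (brk ?F (xs[i := u]))"
  proof (intro ballI allI impI)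
    fix xs i u c assume xs: "xs \<in> args n ?F" and i: "i < n" and u: "u \<in> carrier ?F"
    note a = pb_args[OF xs]
    show "brk ?F (xs[i := smul ?F c u]) = smul ?F c (brk ?F (xs[i := u]))"
      using K3 K'3 a i u by (simp add: map_update)
  qed
  have F4: "\<forall>x \<in> carrier ?F. tw ?F x \<in> carrier ?F" using K4 K'4 P5 P'5 by simp
  have F5: "\<forall>x \<in> carrier ?F. \<forall>y \<in> carrier ?F. tw ?F (x + y) = tw ?F x + tw ?F y"
    using K5 K'5 by simp
  have F6: "\<forall>x \<in> carrier ?F. \<forall>c. tw ?F (smul ?F c x) = smul ?F c (tw ?F x)"
    using K6 K'6 by simp
  have F7: "\<forall>xs \<in> args n ?F. tw ?F (brk ?F xs) = brk ?F (map (tw ?F) xs)"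
  proof
    fix xs assume xs: "xs \<in> args n ?F"
    note a = pb_args[OF xs]
    show "tw ?F (brk ?F xs) = brk ?F (map (tw ?F) xs)" using K7 K'7 a by (simp add: comp_def)
  qed
  have F8: "\<forall>xs \<in> args n ?F. \<forall>ys \<in> args (n - 1) ?F.
        brk ?F (brk ?F xs # map (tw ?F) ys) =
          (\<Sum>i<n. brk ?F ((map (tw ?F) xs)[i := brk ?F (xs ! i # ys)]))"
  proof (intro ballI)
    fix xs ys assume xs: "xs \<in> args n ?F" and ys: "ys \<in> args (n - 1) ?F"
    note a = pb_args[OF xs] and b = pb_args[OF ys]
    have lx: "length xs = n" using xs by (simp add: args_def)
    have e1: "fst (\<Sum>i<n. brk ?F ((map (tw ?F) xs)[i := brk ?F (xs ! i # ys)]))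
       = (\<Sum>i<n. brk K ((map (tw K) (map fst xs))[i := brk K ((map fst xs) ! i # map fst ys)]))"
      unfolding fst_sum using lx by (intro sum.cong) (simp_all add: map_update comp_def)
    have e2: "snd (\<Sum>i<n. brk ?F ((map (tw ?F) xs)[i := brk ?F (xs ! i # ys)]))
       = (\<Sum>i<n. brk K' ((map (tw K') (map snd xs))[i := brk K' ((map snd xs) ! i # map snd ys)]))"
      unfolding snd_sum using lx by (intro sum.cong) (simp_all add: map_update comp_def)
    show "brk ?F (brk ?F xs # map (tw ?F) ys) =
          (\<Sum>i<n. brk ?F ((map (tw ?F) xs)[i := brk ?F (xs ! i # ys)]))"
    proof (rule prod_eqI)
      have k8: "brk K (brk K (map fst xs) # map (tw K) (map fst ys)) =
          (\<Sum>i<n. brk K ((map (tw K) (map fst xs))[i := brk K ((map fst xs) ! i # map fst ys)]))"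
        using K8 a(1) b(1) by blast
      have "fst (brk ?F (brk ?F xs # map (tw ?F) ys)) = brk K (brk K (map fst xs) # map (tw K) (map fst ys))"
        by (simp add: comp_def)
      also note k8
      also note e1[symmetric]
      finally show "fst (brk ?F (brk ?F xs # map (tw ?F) ys)) =
          fst (\<Sum>i<n. brk ?F ((map (tw ?F) xs)[i := brk ?F (xs ! i # ys)]))" .
    next
      have k8: "brk K' (brk K' (map snd xs) # map (tw K') (map snd ys)) =
          (\<Sum>i<n. brk K' ((map (tw K') (map snd xs))[i := brk K' ((map snd xs) ! i # map snd ys)]))"
        using K'8 a(2) b(2) by blast
      have "snd (brk ?F (brk ?F xs # map (tw ?F) ys)) = brk K' (brk K' (map snd xs) # map (tw K') (map snd ys))"
        by (simp add: comp_def)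
      also note k8
      also note e2[symmetric]
      finally show "snd (brk ?F (brk ?F xs # map (tw ?F) ys)) =
          snd (\<Sum>i<n. brk ?F ((map (tw ?F) xs)[i := brk ?F (xs ! i # ys)]))" .
    qed
  qed
  show ?thesis unfolding hom_leibniz_def using vF sF F1 F2 F3 F4 F5 F6 F7 F8 by blast
qed

theorem theorem3p11:
  fixes n :: nat
    and K :: "('a::field, 'k::ab_group_add) hlalg"
    and L :: "('a, 'l::ab_group_add) hlalg"
    and p :: "'k \<Rightarrow> 'l"
  assumes "n \<ge> 2"
    and "central_extension n K L p"
    and "perfect n K"
    and "all_central_ext_split n K TYPE('k \<times> 'c::ab_group_add)"
  shows "universal_central_extension n K L p TYPE('c)"
proof -
  have kK: "hom_leibniz n K" and kL: "hom_leibniz n L" and hp: "hl_hom n K L p"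
    and sp: "p ` carrier K = carrier L"
    using assms(2) unfolding central_extension_def hl_extension_def by blast+
  have main: "(\<exists>h. hl_hom n K K' h \<and> (\<forall>x \<in> carrier K. p' (h x) = p x)) \<and>
        (\<forall>h1 h2. hl_hom n K K' h1 \<and> (\<forall>x \<in> carrier K. p' (h1 x) = p x) \<and>
                 hl_hom n K K' h2 \<and> (\<forall>x \<in> carrier K. p' (h2 x) = p x) \<longrightarrow>
                 (\<forall>x \<in> carrier K. h1 x = h2 x))"
    if ce': "central_extension n K' L p'" for K' :: "('a, 'c) hlalg" and p'
  proof
    have kK': "hom_leibniz n K'" and hp': "hl_hom n K' L p'"
      and sp': "p' ` carrier K' = carrier L" and kc': "kernel K' p' \<subseteq> center n K'"
      using ce' unfolding central_extension_def hl_extension_def by blast+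
    let ?F = "pb K K' p p'"
    have kF: "hom_leibniz n ?F" by (rule pb_hl[OF kK kK' kL hp hp'])
    have hf: "hl_hom n ?F K fst" unfolding hl_hom_def by simp
    have sf: "fst ` carrier ?F = carrier K"
    proof
      show "fst ` carrier ?F \<subseteq> carrier K" by auto
    next
      show "carrier K \<subseteq> fst ` carrier ?F"
      proof
        fix a assume a: "a \<in> carrier K"
        hence "p a \<in> carrier L" using hp by (simp add: hl_hom_def)
        then obtain b where b: "b \<in> carrier K'" "p' b = p a" using sp' by (metis imageE)
        hence "(a, b) \<in> carrier ?F" using a by simp
        thus "a \<in> fst ` carrier ?F" by (metis fst_conv image_eqI)
      qed
    qed
    have kcF: "kernel ?F fst \<subseteq> center n ?F"
    proof
      fix x assume x: "x \<in> kernel ?F fst"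
      hence x1: "fst x = 0" and x2: "snd x \<in> carrier K'" and x3': "p' (snd x) = p (fst x)"
        by (auto simp: kernel_def)
      have x3: "p' (snd x) = p 0" using x3' x1 by simp
      have "snd x \<in> kernel K' p'" using x2 x3 hom_zero[OF hp kK] by (simp add: kernel_def)
      hence cx: "snd x \<in> center n K'" using kc' by blast
      have xc: "x \<in> carrier ?F" using x unfolding kernel_def by blast
      show "x \<in> center n ?F" unfolding center_def
      proof (intro CollectI conjI ballI allI impI xc)
        fix xs i assume xs: "xs \<in> args n ?F" and i: "i < n"
        note a = pb_args[OF xs]
        have "brk K ((map fst xs)[i := 0]) = 0" by (rule brk_zero[OF kK a(1) i])
        moreover have "brk K' ((map snd xs)[i := snd x]) = 0" using cx a(2) i by (simp add: center_def)
        ultimately show "brk ?F (xs[i := x]) = 0" using x1 by (simp add: map_update zero_prod_def)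
      qed
    qed
    have ceF: "central_extension n ?F K fst"
      unfolding central_extension_def hl_extension_def using kF kK hf sf kcF by blast
    then obtain s where hs: "hl_hom n K ?F s" and fs: "\<forall>x \<in> carrier K. fst (s x) = x"
      using assms(4) unfolding all_central_ext_split_def splits_def by blast
    have sc: "\<forall>x \<in> carrier K. s x \<in> carrier ?F" using hs by (simp add: hl_hom_def)
    have "hl_hom n K K' (snd \<circ> s)"
      using hs sc unfolding hl_hom_def by (auto simp: comp_def)
    moreover have "\<forall>x \<in> carrier K. p' ((snd \<circ> s) x) = p x"
      using sc fs by auto
    ultimately show "\<exists>h. hl_hom n K K' h \<and> (\<forall>x \<in> carrier K. p' (h x) = p x)" by blast
  next
    have kK': "hom_leibniz n K'" and hp': "hl_hom n K' L p'"
      and kc': "kernel K' p' \<subseteq> center n K'"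
      using ce' unfolding central_extension_def hl_extension_def by blast+
    show "\<forall>h1 h2. hl_hom n K K' h1 \<and> (\<forall>x \<in> carrier K. p' (h1 x) = p x) \<and>
                 hl_hom n K K' h2 \<and> (\<forall>x \<in> carrier K. p' (h2 x) = p x) \<longrightarrow>
                 (\<forall>x \<in> carrier K. h1 x = h2 x)"
    proof (intro allI impI)
      fix h1 h2 assume H: "hl_hom n K K' h1 \<and> (\<forall>x \<in> carrier K. p' (h1 x) = p x) \<and>
                 hl_hom n K K' h2 \<and> (\<forall>x \<in> carrier K. p' (h2 x) = p x)"
      hence h1: "hl_hom n K K' h1" and h2: "hl_hom n K K' h2"
        and e1: "\<forall>x \<in> carrier K. p' (h1 x) = p x" and e2: "\<forall>x \<in> carrier K. p' (h2 x) = p x"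
        by blast+
      have h1c: "\<forall>x \<in> carrier K. h1 x \<in> carrier K'" using h1 by (simp add: hl_hom_def)
      have h2c: "\<forall>x \<in> carrier K. h2 x \<in> carrier K'" using h2 by (simp add: hl_hom_def)
      have dc: "h1 x - h2 x \<in> center n K'" if x: "x \<in> carrier K" for x
      proof -
        have "p' (h1 x - h2 x) = p' (h1 x) - p' (h2 x)"
          using hom_diff[OF hp' kK'] h1c h2c x by blast
        also have "\<dots> = 0" using e1 e2 x by simp
        finally have "h1 x - h2 x \<in> kernel K' p'"
          using hl_diff[OF kK'] h1c h2c x by (simp add: kernel_def)
        thus ?thesis using kc' by blast
      qed
      interpret vector_space "smul K" by (rule hl_vs[OF kK])
      define S where "S = {x \<in> carrier K. h1 x = h2 x}"
      have sS: "subspace S"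
      proof (rule subspaceI)
        show "0 \<in> S" unfolding S_def using hl_zero[OF kK] hom_zero[OF h1 kK] hom_zero[OF h2 kK] by simp
      next
        fix x y assume "x \<in> S" "y \<in> S"
        then show "x + y \<in> S" unfolding S_def using hl_add[OF kK] h1 h2 unfolding hl_hom_def by auto
      next
        fix c x assume "x \<in> S"
        then show "smul K c x \<in> S" unfolding S_def using hl_scale[OF kK] h1 h2 unfolding hl_hom_def by auto
      qed
      have bS: "{brk K xs | xs. xs \<in> args n K} \<subseteq> S"
      proof clarify
        fix xs assume xs: "xs \<in> args n K"
        have m1: "map h1 xs \<in> args n K'" and m2: "map h2 xs \<in> args n K'"
          using xs h1c h2c by (auto simp: args_def)
        have "\<forall>j<n. map h1 xs ! j - map h2 xs ! j \<in> center n K'"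
        proof (intro allI impI)
          fix j assume j: "j < n"
          have "xs ! j \<in> carrier K" using xs j by (auto simp: args_def)
          thus "map h1 xs ! j - map h2 xs ! j \<in> center n K'" using dc j xs by (simp add: args_def)
        qed
        hence "brk K' (map h1 xs) = brk K' (map h2 xs)" using center_brk_eq[OF kK' m1 m2] by blast
        moreover have "h1 (brk K xs) = brk K' (map h1 xs)" "h2 (brk K xs) = brk K' (map h2 xs)"
          using h1 h2 xs unfolding hl_hom_def by blast+
        moreover have "brk K xs \<in> carrier K" using kK xs unfolding hom_leibniz_def by blast
        ultimately show "brk K xs \<in> S" unfolding S_def by simp
      qed
      have "carrier K \<subseteq> S" using span_minimal[OF bS sS] assms(3) unfolding perfect_def by simp
      thus "\<forall>x \<in> carrier K. h1 x = h2 x" unfolding S_def by blast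
    qed
  qed
  show ?thesis unfolding universal_central_extension_def using assms(2) main by blast
qed

end
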